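(* If $\sum_ir_ix_i\le f\le\sum_js_jy_j$ for positive simple functions $\sum_ir_ix_i$, $\sum_js_jy_j$ and $f\in R$, then $\sum_ir_ix_i\le\sum_js_jy_j$.
   Context: $R$ is a Riesz space over $\mathbb{Q}$ with strong unit $1$; rationals $r$ are identified with $r\cdot1$. $\mathrm{Spec}(R)$ is the distributive lattice generated by $D(a)$, $a\in R$, subject to $D(1)=1$; $D(a)\wedge D(-a)=0$; $D(a+b)\le D(a)\vee D(b)$; $D(a)=0$ if $a\le0$; $D(a\vee b)=D(a)\vee D(b)$. $B$ is the Boolean algebra freely generated by $\mathrm{Spec}(R)$; $(f>r):=D(f-r)$, $(f<r):=D(r-f)$, $(f\le r):=\neg(f>r)$, $(f\ge r):=\neg(f<r)$. A positive simple function is a formal finite sum $\sum_i r_ix_i$ with rationals $r_i\ge0$, $x_i\in B$; for a finite index set $I$, $x_I:=\bigwedge_{i\in I}x_i$ ($x_\emptyset=1$), $r_I:=\sum_{i\in I}r_i$ ($r_\emptyset=0$). Orders: $\sum_ir_ix_i\le\sum_js_jy_j$ iff for every finite index set $I$, $x_I\le\bigvee\{y_J: J \text{ finite index set with } r_I\le s_J\}$; $\sum_ir_ix_i\le f$ iff $x_I\le(f\ge r_I)$ for every finite $I$; $f\le\sum_js_jy_j$ iff $1=\bigvee_J((f\le s_J)\wedge y_J)$ over all finite index sets $J$. *)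

theory Defs
  imports Complex_Main "HOL-Library.Lattice_Algebras"
begin

text \<open>R is a lattice-ordered abelian group (type class lattice_ab_group_add)
  together with a scalar multiplication by rationals making it a Q-vector
  space whose order is compatible with positive scalars; u is the strong unit 1.\<close>

definition riesz_Q_unit :: "(rat \<Rightarrow> 'a::lattice_ab_group_add \<Rightarrow> 'a) \<Rightarrow> 'a \<Rightarrow> bool" where
  "riesz_Q_unit smul u \<longleftrightarrow>
     (\<forall>r s a. smul (r + s) a = smul r a + smul s a) \<and>
     (\<forall>r a b. smul r (a + b) = smul r a + smul r b) \<and>
     (\<forall>r s a. smul (r * s) a = smul r (smul s a)) \<and>
     (\<forall>a. smul 1 a = a) \<and>
     (\<forall>r a. 0 \<le> r \<longrightarrow> 0 \<le> a \<longrightarrow> 0 \<le> smul r a) \<and>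
     0 \<le> u \<and>
     (\<forall>a. \<exists>n::nat. a \<le> smul (of_nat n) u \<and> - a \<le> smul (of_nat n) u)"

datatype 'a bexp = BAtom 'a | BTop | BBot | BNot "'a bexp"
  | BAnd "'a bexp" "'a bexp" | BOr "'a bexp" "'a bexp"

text \<open>Equality in B: the congruence generated by the Boolean algebra axioms
  and the defining relations of Spec(R), where BAtom a stands for D(a).\<close>

inductive beq :: "'a::lattice_ab_group_add \<Rightarrow> 'a bexp \<Rightarrow> 'a bexp \<Rightarrow> bool" for u where
  refl: "beq u x x"
| sym: "beq u x y \<Longrightarrow> beq u y x"
| trans: "beq u x y \<Longrightarrow> beq u y z \<Longrightarrow> beq u x z"
| cong_not: "beq u x y \<Longrightarrow> beq u (BNot x) (BNot y)"
| cong_and: "beq u x x' \<Longrightarrow> beq u y y' \<Longrightarrow> beq u (BAnd x y) (BAnd x' y')"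
| cong_or: "beq u x x' \<Longrightarrow> beq u y y' \<Longrightarrow> beq u (BOr x y) (BOr x' y')"
| and_comm: "beq u (BAnd x y) (BAnd y x)"
| or_comm: "beq u (BOr x y) (BOr y x)"
| and_assoc: "beq u (BAnd (BAnd x y) z) (BAnd x (BAnd y z))"
| or_assoc: "beq u (BOr (BOr x y) z) (BOr x (BOr y z))"
| and_absorb: "beq u (BAnd x (BOr x y)) x"
| or_absorb: "beq u (BOr x (BAnd x y)) x"
| distrib: "beq u (BAnd x (BOr y z)) (BOr (BAnd x y) (BAnd x z))"
| and_top: "beq u (BAnd x BTop) x"
| or_bot: "beq u (BOr x BBot) x"
| and_compl: "beq u (BAnd x (BNot x)) BBot"
| or_compl: "beq u (BOr x (BNot x)) BTop"
| D_unit: "beq u (BAtom u) BTop"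
| D_neg: "beq u (BAnd (BAtom a) (BAtom (- a))) BBot"
| D_add: "beq u (BAnd (BAtom (a + b)) (BOr (BAtom a) (BAtom b))) (BAtom (a + b))"
| D_nonpos: "a \<le> 0 \<Longrightarrow> beq u (BAtom a) BBot"
| D_sup: "beq u (BAtom (sup a b)) (BOr (BAtom a) (BAtom b))"

definition ble :: "'a::lattice_ab_group_add \<Rightarrow> 'a bexp \<Rightarrow> 'a bexp \<Rightarrow> bool" where
  "ble u x y \<longleftrightarrow> beq u (BAnd x y) x"

definition bconj :: "'a bexp list \<Rightarrow> 'a bexp" where
  "bconj xs = foldr BAnd xs BTop"

definition bdisj :: "'a bexp list \<Rightarrow> 'a bexp" where
  "bdisj xs = foldr BOr xs BBot"

definition gtb :: "(rat \<Rightarrow> 'a::lattice_ab_group_add \<Rightarrow> 'a) \<Rightarrow> 'a \<Rightarrow> 'a \<Rightarrow> rat \<Rightarrow> 'a bexp" where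
  "gtb smul u f r = BAtom (f - smul r u)"
definition ltb :: "(rat \<Rightarrow> 'a::lattice_ab_group_add \<Rightarrow> 'a) \<Rightarrow> 'a \<Rightarrow> 'a \<Rightarrow> rat \<Rightarrow> 'a bexp" where
  "ltb smul u f r = BAtom (smul r u - f)"
definition leb :: "(rat \<Rightarrow> 'a::lattice_ab_group_add \<Rightarrow> 'a) \<Rightarrow> 'a \<Rightarrow> 'a \<Rightarrow> rat \<Rightarrow> 'a bexp" where
  "leb smul u f r = BNot (gtb smul u f r)"
definition geb :: "(rat \<Rightarrow> 'a::lattice_ab_group_add \<Rightarrow> 'a) \<Rightarrow> 'a \<Rightarrow> 'a \<Rightarrow> rat \<Rightarrow> 'a bexp" where
  "geb smul u f r = BNot (ltb smul u f r)"

text \<open>A formal sum  sum_i r_i x_i  is a list of pairs (r_i, x_i); finite index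
  sets I are the sublists of [0..<length], i.e. subsets of the index range.\<close>

definition pos_simple :: "(rat \<times> 'a bexp) list \<Rightarrow> bool" where
  "pos_simple sf \<longleftrightarrow> (\<forall>p \<in> set sf. 0 \<le> fst p)"

definition idx_sets :: "(rat \<times> 'a bexp) list \<Rightarrow> nat list list" where
  "idx_sets sf = subseqs [0..<length sf]"

definition xI :: "(rat \<times> 'a bexp) list \<Rightarrow> nat list \<Rightarrow> 'a bexp" where
  "xI sf is = bconj (map (\<lambda>i. snd (sf ! i)) is)"

definition rI :: "(rat \<times> 'a bexp) list \<Rightarrow> nat list \<Rightarrow> rat" where
  "rI sf is = sum_list (map (\<lambda>i. fst (sf ! i)) is)"

definition sf_le :: "'a::lattice_ab_group_add \<Rightarrow> (rat \<times> 'a bexp) list \<Rightarrow> (rat \<times> 'a bexp) list \<Rightarrow> bool" where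
  "sf_le u sf tf \<longleftrightarrow>
     (\<forall>is \<in> set (idx_sets sf).
        ble u (xI sf is) (bdisj [xI tf js. js \<leftarrow> idx_sets tf, rI sf is \<le> rI tf js]))"

definition sf_le_elem :: "(rat \<Rightarrow> 'a::lattice_ab_group_add \<Rightarrow> 'a) \<Rightarrow> 'a \<Rightarrow> (rat \<times> 'a bexp) list \<Rightarrow> 'a \<Rightarrow> bool" where
  "sf_le_elem smul u sf f \<longleftrightarrow>
     (\<forall>is \<in> set (idx_sets sf). ble u (xI sf is) (geb smul u f (rI sf is)))"

definition elem_le_sf :: "(rat \<Rightarrow> 'a::lattice_ab_group_add \<Rightarrow> 'a) \<Rightarrow> 'a \<Rightarrow> 'a \<Rightarrow> (rat \<times> 'a bexp) list \<Rightarrow> bool" where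
  "elem_le_sf smul u f tf \<longleftrightarrow>
     beq u BTop (bdisj [BAnd (leb smul u f (rI tf js)) (xI tf js). js \<leftarrow> idx_sets tf])"

end

theory Submission
  imports Defs
begin

lemma beq_ble: "beq u x y \<Longrightarrow> ble u x y"
proof -
  assume h: "beq u x y"
  have "beq u x (BOr x (BAnd x x))" by (rule beq.sym, rule beq.or_absorb)
  then have "beq u (BAnd x x) (BAnd x (BOr x (BAnd x x)))"
    by (rule beq.cong_and[OF beq.refl])
  then have i: "beq u (BAnd x x) x" by (rule beq.trans[OF _ beq.and_absorb])
  have "beq u (BAnd x y) (BAnd x x)" by (rule beq.cong_and[OF beq.refl beq.sym[OF h]])
  then show ?thesis unfolding ble_def by (rule beq.trans[OF _ i])
qed

lemma ble_refl: "ble u x x" by (rule beq_ble, rule beq.refl)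

lemma ble_trans: "ble u x y \<Longrightarrow> ble u y z \<Longrightarrow> ble u x z"
  unfolding ble_def
proof -
  assume a: "beq u (BAnd x y) x" and b: "beq u (BAnd y z) y"
  have "beq u (BAnd x z) (BAnd (BAnd x y) z)" by (rule beq.cong_and[OF beq.sym[OF a] beq.refl])
  moreover have "beq u (BAnd (BAnd x y) z) (BAnd x (BAnd y z))" by (rule beq.and_assoc)
  moreover have "beq u (BAnd x (BAnd y z)) (BAnd x y)" by (rule beq.cong_and[OF beq.refl b])
  ultimately show "beq u (BAnd x z) x" using a beq.trans by (meson beq.trans)
qed

lemma ble_and1: "ble u (BAnd x y) x"
proof -
  have "beq u (BAnd (BAnd x y) x) (BAnd x (BAnd x y))" by (rule beq.and_comm)
  moreover have "beq u (BAnd x (BAnd x y)) (BAnd (BAnd x x) y)" by (rule beq.sym, rule beq.and_assoc)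
  moreover have "beq u (BAnd (BAnd x x) y) (BAnd x y)"
    using beq_ble[OF beq.refl, of u x] unfolding ble_def by (rule beq.cong_and[OF _ beq.refl])
  ultimately show ?thesis unfolding ble_def by (meson beq.trans)
qed

lemma ble_and2: "ble u (BAnd x y) y"
proof -
  have "ble u (BAnd x y) (BAnd y x)" by (rule beq_ble, rule beq.and_comm)
  then show ?thesis by (rule ble_trans[OF _ ble_and1])
qed

lemma ble_andI: "ble u z x \<Longrightarrow> ble u z y \<Longrightarrow> ble u z (BAnd x y)"
  unfolding ble_def
proof -
  assume a: "beq u (BAnd z x) z" and b: "beq u (BAnd z y) z"
  have "beq u (BAnd z (BAnd x y)) (BAnd (BAnd z x) y)" by (rule beq.sym, rule beq.and_assoc)
  moreover have "beq u (BAnd (BAnd z x) y) (BAnd z y)" by (rule beq.cong_and[OF a beq.refl])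
  ultimately show "beq u (BAnd z (BAnd x y)) z" using b by (meson beq.trans)
qed

lemma ble_or1: "ble u x (BOr x y)" unfolding ble_def by (rule beq.and_absorb)

lemma ble_or2: "ble u y (BOr x y)"
proof -
  have "ble u (BOr y x) (BOr x y)" by (rule beq_ble, rule beq.or_comm)
  then show ?thesis by (rule ble_trans[OF ble_or1])
qed

lemma ble_top: "ble u x BTop" unfolding ble_def by (rule beq.and_top)

lemma ble_bot: "ble u BBot x"
proof -
  have "beq u (BOr BBot x) x" using beq.trans[OF beq.or_comm beq.or_bot] .
  then have "beq u (BAnd BBot x) (BAnd BBot (BOr BBot x))"
    by (rule beq.cong_and[OF beq.refl beq.sym])
  then show ?thesis unfolding ble_def by (rule beq.trans[OF _ beq.and_absorb])
qed

lemma ble_distrib: "ble u (BAnd x (BOr y z)) (BOr (BAnd x y) (BAnd x z))"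
  by (rule beq_ble, rule beq.distrib)

lemma ble_orE: "ble u x z \<Longrightarrow> ble u y z \<Longrightarrow> ble u (BOr x y) z"
  unfolding ble_def
proof -
  assume a: "beq u (BAnd x z) x" and b: "beq u (BAnd y z) y"
  have a': "beq u (BAnd z x) x" using beq.trans[OF beq.and_comm a] .
  have b': "beq u (BAnd z y) y" using beq.trans[OF beq.and_comm b] .
  have "beq u (BAnd (BOr x y) z) (BAnd z (BOr x y))" by (rule beq.and_comm)
  moreover have "beq u (BAnd z (BOr x y)) (BOr (BAnd z x) (BAnd z y))" by (rule beq.distrib)
  moreover have "beq u (BOr (BAnd z x) (BAnd z y)) (BOr x y)" by (rule beq.cong_or[OF a' b'])
  ultimately show "beq u (BAnd (BOr x y) z) (BOr x y)" by (meson beq.trans)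
qed

lemma ble_and_mono: "ble u a c \<Longrightarrow> ble u b d \<Longrightarrow> ble u (BAnd a b) (BAnd c d)"
  by (rule ble_andI; erule ble_trans[rotated], rule ble_and1 ble_and2)

lemma ble_or_mono: "ble u a c \<Longrightarrow> ble u b d \<Longrightarrow> ble u (BOr a b) (BOr c d)"
  by (rule ble_orE; erule ble_trans, rule ble_or1 ble_or2)

lemma ble_split: "ble u a (BOr b c) \<Longrightarrow> ble u (BAnd a b) z \<Longrightarrow> ble u (BAnd a c) z \<Longrightarrow> ble u a z"
proof -
  assume h: "ble u a (BOr b c)" "ble u (BAnd a b) z" "ble u (BAnd a c) z"
  have "ble u a (BAnd a (BOr b c))" using ble_andI[OF ble_refl h(1)] .
  then have "ble u a (BOr (BAnd a b) (BAnd a c))" by (rule ble_trans[OF _ ble_distrib])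
  then show ?thesis by (rule ble_trans[OF _ ble_orE[OF h(2,3)]])
qed

lemma ble_bdisj_split:
  "ble u a (bdisj xs) \<Longrightarrow> (\<And>x. x \<in> set xs \<Longrightarrow> ble u (BAnd a x) z) \<Longrightarrow> ble u a z"
proof (induction xs arbitrary: a)
  case Nil
  then show ?case using ble_trans[OF _ ble_bot] by (simp add: bdisj_def)
next
  case (Cons x xs)
  have h1: "ble u a (BOr x (bdisj xs))" using Cons.prems(1) by (simp add: bdisj_def)
  have h2: "ble u (BAnd a x) z" using Cons.prems(2) by simp
  have h3: "ble u (BAnd a (bdisj xs)) z"
  proof (rule Cons.IH)
    show "ble u (BAnd a (bdisj xs)) (bdisj xs)" by (rule ble_and2)
    fix y assume "y \<in> set xs"
    then have "ble u (BAnd a y) z" using Cons.prems(2) by simp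
    moreover have "ble u (BAnd (BAnd a (bdisj xs)) y) (BAnd a y)"
      using ble_and_mono[OF ble_and1 ble_refl] .
    ultimately show "ble u (BAnd (BAnd a (bdisj xs)) y) z" by (rule ble_trans[rotated])
  qed
  show ?case using ble_split[OF h1 h2 h3] .
qed

lemma ble_bdisj_mem: "x \<in> set xs \<Longrightarrow> ble u x (bdisj xs)"
proof (induction xs)
  case Nil then show ?case by simp
next
  case (Cons y xs)
  then show ?case unfolding bdisj_def
    using ble_or1 ble_trans[OF _ ble_or2] by (auto simp: bdisj_def)
qed

lemma ble_compl: "ble u (BAnd x (BNot x)) BBot" by (rule beq_ble, rule beq.and_compl)

lemma ble_notnot_bot:
  assumes "ble u BTop (BOr A B)"
  shows "ble u (BAnd (BNot A) (BNot B)) BBot"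
proof (rule ble_split)
  show "ble u (BAnd (BNot A) (BNot B)) (BOr A B)" using ble_trans[OF ble_top assms] .
  have "ble u (BAnd (BAnd (BNot A) (BNot B)) A) (BAnd A (BNot A))"
    by (rule ble_andI[OF ble_and2 ble_trans[OF ble_and1 ble_and1]])
  then show "ble u (BAnd (BAnd (BNot A) (BNot B)) A) BBot" by (rule ble_trans[OF _ ble_compl])
  have "ble u (BAnd (BAnd (BNot A) (BNot B)) B) (BAnd B (BNot B))"
    by (rule ble_andI[OF ble_and2 ble_trans[OF ble_and1 ble_and2]])
  then show "ble u (BAnd (BAnd (BNot A) (BNot B)) B) BBot" by (rule ble_trans[OF _ ble_compl])
qed

lemma D_mono: "a \<le> b \<Longrightarrow> ble u (BAtom a) (BAtom b)"
proof -
  assume "a \<le> b"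
  then have "sup a b = b" by (simp add: sup_absorb2)
  then have "beq u (BAtom b) (BOr (BAtom a) (BAtom b))" using beq.D_sup[of u a b] by simp
  then show ?thesis by (rule ble_trans[OF ble_or1 beq_ble[OF beq.sym]])
qed

lemma D_add_le: "ble u (BAtom (a + b)) (BOr (BAtom a) (BAtom b))"
proof -
  have "beq u (BAnd (BAtom (a + b)) (BOr (BAtom a) (BAtom b))) (BAtom (a + b))" by (rule beq.D_add)
  then show ?thesis unfolding ble_def .
qed

context
  fixes smul :: "rat \<Rightarrow> 'a::lattice_ab_group_add \<Rightarrow> 'a" and u :: 'a
  assumes R: "riesz_Q_unit smul u"
begin

lemma sm_add: "smul (r + s) a = smul r a + smul s a" using R unfolding riesz_Q_unit_def by blast
lemma sm_mult: "smul (r * s) a = smul r (smul s a)" using R unfolding riesz_Q_unit_def by blast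
lemma sm_pos: "0 \<le> r \<Longrightarrow> 0 \<le> a \<Longrightarrow> 0 \<le> smul r a" using R unfolding riesz_Q_unit_def by blast
lemma u_pos: "0 \<le> u" using R unfolding riesz_Q_unit_def by blast
lemma sm_one: "smul 1 a = a" using R unfolding riesz_Q_unit_def by blast

lemma sm_diff: "smul r a - smul s a = smul (r - s) a"
  using sm_add[of "r - s" s a] by (simp add: algebra_simps)

lemma sm_zero: "smul 0 a = 0"
  using sm_add[of 0 0 a] by simp

lemma D_nat_mult: "ble u (BAtom (smul (of_nat n) a)) (BAtom a)"
proof (induction n)
  case 0
  have "beq u (BAtom (smul 0 a)) BBot" by (rule beq.D_nonpos, simp add: sm_zero)
  then show ?case using ble_trans[OF beq_ble ble_bot] by simp
next
  case (Suc n)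
  have "smul (of_nat (Suc n)) a = smul (of_nat n) a + a" using sm_add[of "of_nat n" 1 a] sm_one
    by (simp add: add.commute)
  then have "ble u (BAtom (smul (of_nat (Suc n)) a)) (BOr (BAtom (smul (of_nat n) a)) (BAtom a))"
    using D_add_le by metis
  then show ?case by (rule ble_trans[OF _ ble_orE[OF Suc ble_refl]])
qed

lemma D_pos_unit: "0 < c \<Longrightarrow> ble u BTop (BAtom (smul c u))"
proof -
  assume c: "0 < c"
  obtain n :: nat where n: "1 / c \<le> of_nat n" using reals_Archimedean2[of "1/c"] by (meson less_imp_le)
  then have nc: "1 \<le> of_nat n * c" using c by (simp add: field_simps)
  have "u \<le> smul (of_nat n * c) u"
  proof -
    have "0 \<le> smul (of_nat n * c - 1) u" using nc u_pos sm_pos by simp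
    then have "0 \<le> smul (of_nat n * c) u - smul 1 u" by (simp add: sm_diff)
    then show ?thesis by (simp add: sm_one)
  qed
  then have "ble u (BAtom u) (BAtom (smul (of_nat n) (smul c u)))" using D_mono sm_mult by metis
  moreover have "ble u BTop (BAtom u)" by (rule beq_ble, rule beq.sym, rule beq.D_unit)
  ultimately show ?thesis using ble_trans[OF _ D_nat_mult] ble_trans by meson
qed

lemma geb_leb_bot:
  assumes "s < r"
  shows "ble u (BAnd (geb smul u f r) (leb smul u f s)) BBot"
  unfolding geb_def leb_def
proof (rule ble_notnot_bot)
  have "(smul r u - f) + (f - smul s u) = smul (r - s) u" using sm_diff[of r u s] by (simp add: algebra_simps)
  then have "ble u (BAtom (smul (r - s) u)) (BOr (ltb smul u f r) (gtb smul u f s))"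
    unfolding ltb_def gtb_def using D_add_le by metis
  then show "ble u BTop (BOr (ltb smul u f r) (gtb smul u f s))"
    using ble_trans[OF D_pos_unit[of "r - s"]] assms by simp
qed

end

theorem lemma4p7:
  fixes smul :: "rat \<Rightarrow> 'a::lattice_ab_group_add \<Rightarrow> 'a"
    and u :: 'a and f :: 'a
    and sf tf :: "(rat \<times> 'a bexp) list"
  assumes "riesz_Q_unit smul u"
    and "pos_simple sf" and "pos_simple tf"
    and "sf_le_elem smul u sf f"
    and "elem_le_sf smul u f tf"
  shows "sf_le u sf tf"
  unfolding sf_le_def
proof
  fix "is" assume is_in: "is \<in> set (idx_sets sf)"
  let ?a = "xI sf is" and ?r = "rI sf is"
  let ?G = "[xI tf js. js \<leftarrow> idx_sets tf, ?r \<le> rI tf js]"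
  let ?T = "[BAnd (leb smul u f (rI tf js)) (xI tf js). js \<leftarrow> idx_sets tf]"
  have ag: "ble u ?a (geb smul u f ?r)" using assms(4) is_in unfolding sf_le_elem_def by blast
  have "ble u BTop (bdisj ?T)" using assms(5) unfolding elem_le_sf_def by (rule beq_ble)
  then have aT: "ble u ?a (bdisj ?T)" by (rule ble_trans[OF ble_top])
  show "ble u ?a (bdisj ?G)"
  proof (rule ble_bdisj_split[OF aT])
    fix t assume "t \<in> set ?T"
    then obtain js where js: "js \<in> set (idx_sets tf)"
      and t: "t = BAnd (leb smul u f (rI tf js)) (xI tf js)" by auto
    show "ble u (BAnd ?a t) (bdisj ?G)"
    proof (cases "?r \<le> rI tf js")
      case True
      then have "xI tf js \<in> set ?G" using js by auto
      then have "ble u (xI tf js) (bdisj ?G)" by (rule ble_bdisj_mem)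
      then show ?thesis unfolding t by (rule ble_trans[OF ble_and2 ble_trans[OF ble_and2]])
    next
      case False
      then have "ble u (BAnd (geb smul u f ?r) (leb smul u f (rI tf js))) BBot"
        using geb_leb_bot[OF assms(1)] by simp
      moreover have "ble u (BAnd ?a t) (BAnd (geb smul u f ?r) (leb smul u f (rI tf js)))"
        unfolding t using ble_and_mono[OF ag ble_and1] .
      ultimately show ?thesis by (meson ble_trans ble_bot)
    qed
  qed
qed

end
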